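(* Let $\mathcal{C}$ be a $t$-periodic triangulated category over the finite field $k$, with $t>1$ odd, and let $Z\xrightarrow{l}M\xrightarrow{m}L\xrightarrow{n}Z[1]$ be a triangle in $\mathcal{C}$. Put $n\operatorname{Hom}(Z[1],L)=\{b\in\operatorname{End}L\mid b=ns \text{ for some } s\in\operatorname{Hom}(Z[1],L)\}$ and $\operatorname{Hom}(Z[1],L)n=\{d\in\operatorname{End}Z[1]\mid d=sn \text{ for some } s\in\operatorname{Hom}(Z[1],L)\}$. Then \begin{enumerate} \item $|n\operatorname{Hom}(Z[1],L)|=\Big(\prod_{i=1}^t\frac{|\operatorname{Hom}(M[i],L)|^{(-1)^i}}{|\operatorname{Hom}(Z[i],L)|^{(-1)^i}\,|\operatorname{Hom}(L[i],L)|^{(-1)^i}}\Big)^{1/2}$; \item $|\operatorname{Hom}(Z[1],L)n|=\Big(\prod_{i=1}^t\frac{|\operatorname{Hom}(Z[i],M)|^{(-1)^i}}{|\operatorname{Hom}(Z[i],L)|^{(-1)^i}\,|\operatorname{Hom}(Z[i],Z)|^{(-1)^i}}\Big)^{1/2}$. \end{enumerate}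
   Context: $k$ is a finite field with $q$ elements. A $t$-periodic triangulated category is a $k$-additive triangulated category $\mathcal{C}$ with translation functor $T=[1]$ such that (1) $\operatorname{Hom}(X,Y)$ is a finite-dimensional $k$-vector space for all $X,Y$; (2) $\operatorname{End}X$ is a finite-dimensional local $k$-algebra for every indecomposable $X$; (3) $[1]^t=[t]\cong 1_{\mathcal{C}}$. Composition is written left-to-right: for $f:X\to Y$, $g:Y\to Z$, $fg:X\to Z$ denotes "first $f$, then $g$". $|S|$ denotes the cardinality of a finite set $S$. *)

theory Defs
  imports Complex_Main
begin

text \<open>A k-linear category with a shift endofunctor and a class of distinguished
triangles, given by explicit data. Composition is written left-to-right:
cmp f g means first f, then g.\<close>

record ('o, 'm, 'k) tricat =
  Ob   :: "'o set"
  Hom  :: "'o \<Rightarrow> 'o \<Rightarrow> 'm set"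
  cmp  :: "'m \<Rightarrow> 'm \<Rightarrow> 'm"
  idm  :: "'o \<Rightarrow> 'm"
  add  :: "'m \<Rightarrow> 'm \<Rightarrow> 'm"
  zer  :: "'o \<Rightarrow> 'o \<Rightarrow> 'm"
  neg  :: "'m \<Rightarrow> 'm"
  sm   :: "'k \<Rightarrow> 'm \<Rightarrow> 'm"
  shO  :: "'o \<Rightarrow> 'o"
  shM  :: "'m \<Rightarrow> 'm"
  Dist :: "('o \<times> 'o \<times> 'o \<times> 'm \<times> 'm \<times> 'm) set"

definition category :: "('o, 'm, 'k) tricat \<Rightarrow> bool" where
  "category C \<longleftrightarrow>
     (\<forall>X\<in>Ob C. \<forall>Y\<in>Ob C. \<forall>X'\<in>Ob C. \<forall>Y'\<in>Ob C.
        Hom C X Y \<inter> Hom C X' Y' \<noteq> {} \<longrightarrow> X = X' \<and> Y = Y') \<and>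
     (\<forall>X\<in>Ob C. \<forall>Y\<in>Ob C. \<forall>Z\<in>Ob C. \<forall>f\<in>Hom C X Y. \<forall>g\<in>Hom C Y Z.
        cmp C f g \<in> Hom C X Z) \<and>
     (\<forall>W\<in>Ob C. \<forall>X\<in>Ob C. \<forall>Y\<in>Ob C. \<forall>Z\<in>Ob C.
        \<forall>f\<in>Hom C W X. \<forall>g\<in>Hom C X Y. \<forall>h\<in>Hom C Y Z.
        cmp C (cmp C f g) h = cmp C f (cmp C g h)) \<and>
     (\<forall>X\<in>Ob C. idm C X \<in> Hom C X X) \<and>
     (\<forall>X\<in>Ob C. \<forall>Y\<in>Ob C. \<forall>f\<in>Hom C X Y.
        cmp C (idm C X) f = f \<and> cmp C f (idm C Y) = f)"

fun lincomb :: "('o, 'm, 'k) tricat \<Rightarrow> 'o \<Rightarrow> 'o \<Rightarrow> ('k \<times> 'm) list \<Rightarrow> 'm" where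
  "lincomb C X Y [] = zer C X Y"
| "lincomb C X Y ((a, f) # xs) = add C (sm C a f) (lincomb C X Y xs)"

definition fin_dim_hom :: "('o, 'm, 'k) tricat \<Rightarrow> 'o \<Rightarrow> 'o \<Rightarrow> bool" where
  "fin_dim_hom C X Y \<longleftrightarrow>
     (\<exists>bs. set bs \<subseteq> Hom C X Y \<and>
        (\<forall>f\<in>Hom C X Y. \<exists>cs. length cs = length bs \<and> f = lincomb C X Y (zip cs bs)))"

definition k_linear :: "('o, 'm, 'k::field) tricat \<Rightarrow> bool" where
  "k_linear C \<longleftrightarrow>
     (\<forall>X\<in>Ob C. \<forall>Y\<in>Ob C.
        zer C X Y \<in> Hom C X Y \<and>
        (\<forall>f\<in>Hom C X Y. \<forall>g\<in>Hom C X Y. add C f g \<in> Hom C X Y) \<and>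
        (\<forall>f\<in>Hom C X Y. neg C f \<in> Hom C X Y) \<and>
        (\<forall>a. \<forall>f\<in>Hom C X Y. sm C a f \<in> Hom C X Y) \<and>
        (\<forall>f\<in>Hom C X Y. \<forall>g\<in>Hom C X Y. \<forall>h\<in>Hom C X Y.
            add C (add C f g) h = add C f (add C g h)) \<and>
        (\<forall>f\<in>Hom C X Y. \<forall>g\<in>Hom C X Y. add C f g = add C g f) \<and>
        (\<forall>f\<in>Hom C X Y. add C (zer C X Y) f = f) \<and>
        (\<forall>f\<in>Hom C X Y. add C (neg C f) f = zer C X Y) \<and>
        (\<forall>a. \<forall>f\<in>Hom C X Y. \<forall>g\<in>Hom C X Y.
            sm C a (add C f g) = add C (sm C a f) (sm C a g)) \<and>
        (\<forall>a b. \<forall>f\<in>Hom C X Y. sm C (a + b) f = add C (sm C a f) (sm C b f)) \<and>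
        (\<forall>a b. \<forall>f\<in>Hom C X Y. sm C (a * b) f = sm C a (sm C b f)) \<and>
        (\<forall>f\<in>Hom C X Y. sm C 1 f = f)) \<and>
     (\<forall>X\<in>Ob C. \<forall>Y\<in>Ob C. \<forall>Z\<in>Ob C.
        (\<forall>f\<in>Hom C X Y. \<forall>f'\<in>Hom C X Y. \<forall>g\<in>Hom C Y Z.
            cmp C (add C f f') g = add C (cmp C f g) (cmp C f' g)) \<and>
        (\<forall>f\<in>Hom C X Y. \<forall>g\<in>Hom C Y Z. \<forall>g'\<in>Hom C Y Z.
            cmp C f (add C g g') = add C (cmp C f g) (cmp C f g')) \<and>
        (\<forall>a. \<forall>f\<in>Hom C X Y. \<forall>g\<in>Hom C Y Z.
            cmp C (sm C a f) g = sm C a (cmp C f g) \<and>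
            cmp C f (sm C a g) = sm C a (cmp C f g)))"

definition is_zero_obj :: "('o, 'm, 'k) tricat \<Rightarrow> 'o \<Rightarrow> bool" where
  "is_zero_obj C Z0 \<longleftrightarrow> Z0 \<in> Ob C \<and>
     (\<forall>X\<in>Ob C. Hom C Z0 X = {zer C Z0 X} \<and> Hom C X Z0 = {zer C X Z0})"

definition biprod :: "('o, 'm, 'k) tricat \<Rightarrow> 'o \<Rightarrow> 'o \<Rightarrow> 'o \<Rightarrow> 'm \<Rightarrow> 'm \<Rightarrow> 'm \<Rightarrow> 'm \<Rightarrow> bool" where
  "biprod C X Y S i1 i2 p1 p2 \<longleftrightarrow> S \<in> Ob C \<and>
     i1 \<in> Hom C X S \<and> i2 \<in> Hom C Y S \<and> p1 \<in> Hom C S X \<and> p2 \<in> Hom C S Y \<and>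
     cmp C i1 p1 = idm C X \<and> cmp C i2 p2 = idm C Y \<and>
     cmp C i1 p2 = zer C X Y \<and> cmp C i2 p1 = zer C Y X \<and>
     add C (cmp C p1 i1) (cmp C p2 i2) = idm C S"

definition additive :: "('o, 'm, 'k) tricat \<Rightarrow> bool" where
  "additive C \<longleftrightarrow> (\<exists>Z0. is_zero_obj C Z0) \<and>
     (\<forall>X\<in>Ob C. \<forall>Y\<in>Ob C. \<exists>S i1 i2 p1 p2. biprod C X Y S i1 i2 p1 p2)"

definition iso :: "('o, 'm, 'k) tricat \<Rightarrow> 'm \<Rightarrow> 'o \<Rightarrow> 'o \<Rightarrow> bool" where
  "iso C f X Y \<longleftrightarrow> f \<in> Hom C X Y \<and>
     (\<exists>g\<in>Hom C Y X. cmp C f g = idm C X \<and> cmp C g f = idm C Y)"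

definition shift_functor :: "('o, 'm, 'k) tricat \<Rightarrow> bool" where
  "shift_functor C \<longleftrightarrow>
     (\<forall>X\<in>Ob C. shO C X \<in> Ob C) \<and>
     (\<forall>X\<in>Ob C. \<forall>Y\<in>Ob C. \<forall>f\<in>Hom C X Y. shM C f \<in> Hom C (shO C X) (shO C Y)) \<and>
     (\<forall>X\<in>Ob C. shM C (idm C X) = idm C (shO C X)) \<and>
     (\<forall>X\<in>Ob C. \<forall>Y\<in>Ob C. \<forall>Z\<in>Ob C. \<forall>f\<in>Hom C X Y. \<forall>g\<in>Hom C Y Z.
        shM C (cmp C f g) = cmp C (shM C f) (shM C g)) \<and>
     (\<forall>X\<in>Ob C. \<forall>Y\<in>Ob C. \<forall>f\<in>Hom C X Y. \<forall>g\<in>Hom C X Y.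
        shM C (add C f g) = add C (shM C f) (shM C g)) \<and>
     (\<forall>X\<in>Ob C. \<forall>Y\<in>Ob C. \<forall>a. \<forall>f\<in>Hom C X Y. shM C (sm C a f) = sm C a (shM C f)) \<and>
     (\<forall>X\<in>Ob C. \<forall>Y\<in>Ob C. bij_betw (shM C) (Hom C X Y) (Hom C (shO C X) (shO C Y))) \<and>
     (\<forall>Y\<in>Ob C. \<exists>X\<in>Ob C. \<exists>f. iso C f (shO C X) Y)"

definition triangulated :: "('o, 'm, 'k) tricat \<Rightarrow> bool" where
  "triangulated C \<longleftrightarrow>
     \<comment> \<open>distinguished triangles are triangles\<close>
     (\<forall>(X, Y, Z, f, g, h) \<in> Dist C. X \<in> Ob C \<and> Y \<in> Ob C \<and> Z \<in> Ob C \<and>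
        f \<in> Hom C X Y \<and> g \<in> Hom C Y Z \<and> h \<in> Hom C Z (shO C X)) \<and>
     \<comment> \<open>TR1: closure under isomorphisms of triangles\<close>
     (\<forall>X Y Z f g h X' Y' Z' f' g' h' u v w.
        (X, Y, Z, f, g, h) \<in> Dist C \<and> X' \<in> Ob C \<and> Y' \<in> Ob C \<and> Z' \<in> Ob C \<and>
        f' \<in> Hom C X' Y' \<and> g' \<in> Hom C Y' Z' \<and> h' \<in> Hom C Z' (shO C X') \<and>
        iso C u X X' \<and> iso C v Y Y' \<and> iso C w Z Z' \<and>
        cmp C f v = cmp C u f' \<and> cmp C g w = cmp C v g' \<and>
        cmp C h (shM C u) = cmp C w h'
        \<longrightarrow> (X', Y', Z', f', g', h') \<in> Dist C) \<and>
     \<comment> \<open>TR1: X --1--> X --> 0 --> X[1] is distinguished\<close>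
     (\<forall>X\<in>Ob C. \<forall>Z0. is_zero_obj C Z0 \<longrightarrow>
        (X, X, Z0, idm C X, zer C X Z0, zer C Z0 (shO C X)) \<in> Dist C) \<and>
     \<comment> \<open>TR1: every morphism extends to a distinguished triangle\<close>
     (\<forall>X\<in>Ob C. \<forall>Y\<in>Ob C. \<forall>f\<in>Hom C X Y. \<exists>Z g h. (X, Y, Z, f, g, h) \<in> Dist C) \<and>
     \<comment> \<open>TR2: rotation\<close>
     (\<forall>X Y Z f g h. X \<in> Ob C \<and> Y \<in> Ob C \<and> Z \<in> Ob C \<and>
        f \<in> Hom C X Y \<and> g \<in> Hom C Y Z \<and> h \<in> Hom C Z (shO C X) \<longrightarrow>
        ((X, Y, Z, f, g, h) \<in> Dist C \<longleftrightarrow>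
         (Y, Z, shO C X, g, h, neg C (shM C f)) \<in> Dist C)) \<and>
     \<comment> \<open>TR3: morphisms of triangles\<close>
     (\<forall>X Y Z f g h X' Y' Z' f' g' h' u v.
        (X, Y, Z, f, g, h) \<in> Dist C \<and> (X', Y', Z', f', g', h') \<in> Dist C \<and>
        u \<in> Hom C X X' \<and> v \<in> Hom C Y Y' \<and> cmp C f v = cmp C u f'
        \<longrightarrow> (\<exists>w\<in>Hom C Z Z'. cmp C g w = cmp C v g' \<and>
                cmp C h (shM C u) = cmp C w h')) \<and>
     \<comment> \<open>TR4: octahedral axiom\<close>
     (\<forall>X Y Z u v Z' j k X' l i Y' m n.
        (X, Y, Z', u, j, k) \<in> Dist C \<and> (Y, Z, X', v, l, i) \<in> Dist C \<and>
        (X, Z, Y', cmp C u v, m, n) \<in> Dist C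
        \<longrightarrow> (\<exists>f g. (Z', Y', X', f, g, cmp C i (shM C j)) \<in> Dist C \<and>
                 cmp C j f = cmp C v m \<and> cmp C f n = k \<and> cmp C m g = l \<and>
                 cmp C g i = cmp C n (shM C u)))"

definition is_unit :: "('o, 'm, 'k) tricat \<Rightarrow> 'o \<Rightarrow> 'm \<Rightarrow> bool" where
  "is_unit C X a \<longleftrightarrow> (\<exists>b\<in>Hom C X X. cmp C a b = idm C X \<and> cmp C b a = idm C X)"

definition local_end :: "('o, 'm, 'k) tricat \<Rightarrow> 'o \<Rightarrow> bool" where
  "local_end C X \<longleftrightarrow> idm C X \<noteq> zer C X X \<and>
     (\<forall>a\<in>Hom C X X. \<forall>b\<in>Hom C X X.
        \<not> is_unit C X a \<and> \<not> is_unit C X b \<longrightarrow> \<not> is_unit C X (add C a b))"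

definition indecomposable :: "('o, 'm, 'k) tricat \<Rightarrow> 'o \<Rightarrow> bool" where
  "indecomposable C X \<longleftrightarrow> X \<in> Ob C \<and> \<not> is_zero_obj C X \<and>
     (\<forall>A B i1 i2 p1 p2. A \<in> Ob C \<and> B \<in> Ob C \<and> biprod C A B X i1 i2 p1 p2
        \<longrightarrow> is_zero_obj C A \<or> is_zero_obj C B)"

definition shiftn :: "('o, 'm, 'k) tricat \<Rightarrow> nat \<Rightarrow> 'o \<Rightarrow> 'o" where
  "shiftn C i X = (shO C ^^ i) X"

definition periodic_tricat :: "('o, 'm, 'k::field) tricat \<Rightarrow> nat \<Rightarrow> bool" where
  "periodic_tricat C t \<longleftrightarrow>
     finite (UNIV :: 'k set) \<and>
     category C \<and> k_linear C \<and> additive C \<and> shift_functor C \<and> triangulated C \<and>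
     (\<forall>X\<in>Ob C. \<forall>Y\<in>Ob C. fin_dim_hom C X Y) \<and>
     (\<forall>X. indecomposable C X \<longrightarrow> local_end C X) \<and>
     (\<exists>\<eta>. (\<forall>X\<in>Ob C. iso C (\<eta> X) (shiftn C t X) X) \<and>
        (\<forall>X\<in>Ob C. \<forall>Y\<in>Ob C. \<forall>f\<in>Hom C X Y.
           cmp C (\<eta> X) f = cmp C ((shM C ^^ t) f) (\<eta> Y)))"

end

theory Submission
  imports Defs
begin



lemma card_ker_im:
  fixes G :: "'a set" and p :: "'a \<Rightarrow> 'a \<Rightarrow> 'a" and \<phi> :: "'a \<Rightarrow> 'b"
  assumes fin: "finite G" and zG: "z \<in> G"
    and pG: "\<And>a b. a \<in> G \<Longrightarrow> b \<in> G \<Longrightarrow> p a b \<in> G"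
    and nG: "\<And>a. a \<in> G \<Longrightarrow> ng a \<in> G"
    and asc: "\<And>a b c. a \<in> G \<Longrightarrow> b \<in> G \<Longrightarrow> c \<in> G \<Longrightarrow> p (p a b) c = p a (p b c)"
    and cm: "\<And>a b. a \<in> G \<Longrightarrow> b \<in> G \<Longrightarrow> p a b = p b a"
    and z0: "\<And>a. a \<in> G \<Longrightarrow> p z a = a"
    and ng0: "\<And>a. a \<in> G \<Longrightarrow> p (ng a) a = z"
    and hom: "\<And>a b. a \<in> G \<Longrightarrow> b \<in> G \<Longrightarrow> \<phi> (p a b) = q (\<phi> a) (\<phi> b)"
  shows "card G = card {a \<in> G. \<phi> a = \<phi> z} * card (\<phi> ` G)"
proof -
  let ?K = "{a \<in> G. \<phi> a = \<phi> z}"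
  let ?F = "\<lambda>b. {a \<in> G. \<phi> a = b}"
  have fib: "card (?F b) = card ?K" if b: "b \<in> \<phi> ` G" for b
  proof -
    obtain a0 where a0: "a0 \<in> G" "\<phi> a0 = b" using b by auto
    have img1: "(\<lambda>k. p k a0) ` ?K \<subseteq> ?F b"
    proof
      fix x assume "x \<in> (\<lambda>k. p k a0) ` ?K"
      then obtain k where k: "k \<in> ?K" and x: "x = p k a0" by auto
      have "\<phi> (p k a0) = q (\<phi> z) (\<phi> a0)" using k a0 hom by auto
      also have "\<dots> = \<phi> (p z a0)" using hom zG a0 by auto
      also have "\<dots> = b" using z0 a0 by auto
      finally show "x \<in> ?F b" using k a0 pG x by auto
    qed
    have img2: "(\<lambda>a. p a (ng a0)) ` ?F b \<subseteq> ?K"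
    proof
      fix x assume "x \<in> (\<lambda>a. p a (ng a0)) ` ?F b"
      then obtain a where a: "a \<in> ?F b" and x: "x = p a (ng a0)" by auto
      have "\<phi> (p a (ng a0)) = q (\<phi> a0) (\<phi> (ng a0))" using a a0 hom nG by auto
      also have "\<dots> = \<phi> (p a0 (ng a0))" using hom a0 nG by auto
      also have "\<dots> = \<phi> z" using cm[of a0 "ng a0"] ng0 a0 nG by auto
      finally show "x \<in> ?K" using a a0 pG nG x by auto
    qed
    have bij: "bij_betw (\<lambda>k. p k a0) ?K (?F b)"
    proof (rule bij_betw_byWitness[where f' = "\<lambda>a. p a (ng a0)"])
      show "\<forall>k\<in>?K. p (p k a0) (ng a0) = k"
        using a0 asc ng0 nG cm z0 zG by (metis (no_types, lifting) mem_Collect_eq)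
      show "\<forall>a\<in>?F b. p (p a (ng a0)) a0 = a"
        using a0 asc ng0 nG cm z0 zG by (metis (no_types, lifting) mem_Collect_eq)
    qed (use img1 img2 in auto)
    show ?thesis using bij_betw_same_card[OF bij] by simp
  qed
  have GU: "G = (\<Union>b\<in>\<phi> ` G. ?F b)" by auto
  have "card G = (\<Sum>b\<in>\<phi> ` G. card (?F b))"
    by (subst GU, rule card_UN_disjoint) (use fin in auto)
  also have "\<dots> = (\<Sum>b\<in>\<phi> ` G. card ?K)" using fib by simp
  finally show ?thesis by simp
qed

lemma telescope:
  fixes p :: "nat \<Rightarrow> real"
  assumes "\<And>i. p i > 0"
  shows "(\<Prod>i=1..n. (1 / (p (i-1) * p i)) powi ((-1)^i)) = p 0 * p n powi (-((-1)^n))"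
proof (induction n)
  case 0 then show ?case using assms[of 0] by simp
next
  case (Suc n)
  have "(\<Prod>i=1..Suc n. (1 / (p (i-1) * p i)) powi ((-1)^i)) =
     (\<Prod>i=1..n. (1 / (p (i-1) * p i)) powi ((-1)^i)) * (1 / (p n * p (Suc n))) powi ((-1)^Suc n)"
    by (simp add: prod.nat_ivl_Suc')
  also have "\<dots> = p 0 * p n powi (-((-1)^n)) * (1 / (p n * p (Suc n))) powi (-((-1)^n))"
    using Suc by simp
  also have "\<dots> = p 0 * p (Suc n) powi (-((-1)^Suc n))"
  proof (cases "even n")
    case True then show ?thesis using assms[of n] assms[of "Suc n"] by (simp add: power_int_minus field_simps)
  next
    case False then show ?thesis using assms[of n] assms[of "Suc n"] by (simp add: power_int_minus field_simps)
  qed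
  finally show ?case .
qed




locale ptc =
  fixes C :: "('o, 'm, 'k::field) tricat" and t :: nat
  assumes per: "periodic_tricat C t"
begin

lemma cat: "category C" and kl: "k_linear C" and addi: "additive C" and shf: "shift_functor C"
  and tri: "triangulated C" and fk: "finite (UNIV :: 'k set)"
  and fd: "\<And>X Y. X \<in> Ob C \<Longrightarrow> Y \<in> Ob C \<Longrightarrow> fin_dim_hom C X Y"
  using per unfolding periodic_tricat_def by auto

lemma eta: "\<exists>\<eta>. (\<forall>X\<in>Ob C. iso C (\<eta> X) (shiftn C t X) X) \<and>
        (\<forall>X\<in>Ob C. \<forall>Y\<in>Ob C. \<forall>f\<in>Hom C X Y.
           cmp C (\<eta> X) f = cmp C ((shM C ^^ t) f) (\<eta> Y))"
  using per unfolding periodic_tricat_def by auto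

lemma cmp_type[intro]: "X \<in> Ob C \<Longrightarrow> Y \<in> Ob C \<Longrightarrow> Z \<in> Ob C \<Longrightarrow> f \<in> Hom C X Y \<Longrightarrow> g \<in> Hom C Y Z \<Longrightarrow> cmp C f g \<in> Hom C X Z"
  using cat unfolding category_def by blast
lemma cmp_assoc: "W \<in> Ob C \<Longrightarrow> X \<in> Ob C \<Longrightarrow> Y \<in> Ob C \<Longrightarrow> Z \<in> Ob C \<Longrightarrow> f \<in> Hom C W X \<Longrightarrow> g \<in> Hom C X Y \<Longrightarrow> h \<in> Hom C Y Z
   \<Longrightarrow> cmp C (cmp C f g) h = cmp C f (cmp C g h)"
  using cat unfolding category_def by blast
lemma idm_type[intro]: "X \<in> Ob C \<Longrightarrow> idm C X \<in> Hom C X X"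
  using cat unfolding category_def by blast
lemma idl: "X \<in> Ob C \<Longrightarrow> Y \<in> Ob C \<Longrightarrow> f \<in> Hom C X Y \<Longrightarrow> cmp C (idm C X) f = f"
  using cat unfolding category_def by blast
lemma idr: "X \<in> Ob C \<Longrightarrow> Y \<in> Ob C \<Longrightarrow> f \<in> Hom C X Y \<Longrightarrow> cmp C f (idm C Y) = f"
  using cat unfolding category_def by blast

lemma kl1: "X \<in> Ob C \<Longrightarrow> Y \<in> Ob C \<Longrightarrow>
        zer C X Y \<in> Hom C X Y \<and>
        (\<forall>f\<in>Hom C X Y. \<forall>g\<in>Hom C X Y. add C f g \<in> Hom C X Y) \<and>
        (\<forall>f\<in>Hom C X Y. neg C f \<in> Hom C X Y) \<and>
        (\<forall>a. \<forall>f\<in>Hom C X Y. sm C a f \<in> Hom C X Y) \<and>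
        (\<forall>f\<in>Hom C X Y. \<forall>g\<in>Hom C X Y. \<forall>h\<in>Hom C X Y.
            add C (add C f g) h = add C f (add C g h)) \<and>
        (\<forall>f\<in>Hom C X Y. \<forall>g\<in>Hom C X Y. add C f g = add C g f) \<and>
        (\<forall>f\<in>Hom C X Y. add C (zer C X Y) f = f) \<and>
        (\<forall>f\<in>Hom C X Y. add C (neg C f) f = zer C X Y) \<and>
        (\<forall>a. \<forall>f\<in>Hom C X Y. \<forall>g\<in>Hom C X Y.
            sm C a (add C f g) = add C (sm C a f) (sm C a g)) \<and>
        (\<forall>a b. \<forall>f\<in>Hom C X Y. sm C (a + b) f = add C (sm C a f) (sm C b f)) \<and>
        (\<forall>a b. \<forall>f\<in>Hom C X Y. sm C (a * b) f = sm C a (sm C b f)) \<and>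
        (\<forall>f\<in>Hom C X Y. sm C 1 f = f)"
  by (rule bspec[OF bspec[OF conjunct1[OF kl[unfolded k_linear_def]]]])
lemma kl2: "X \<in> Ob C \<Longrightarrow> Y \<in> Ob C \<Longrightarrow> Z \<in> Ob C \<Longrightarrow>
        (\<forall>f\<in>Hom C X Y. \<forall>f'\<in>Hom C X Y. \<forall>g\<in>Hom C Y Z.
            cmp C (add C f f') g = add C (cmp C f g) (cmp C f' g)) \<and>
        (\<forall>f\<in>Hom C X Y. \<forall>g\<in>Hom C Y Z. \<forall>g'\<in>Hom C Y Z.
            cmp C f (add C g g') = add C (cmp C f g) (cmp C f g'))"
  using bspec[OF bspec[OF bspec[OF conjunct2[OF kl[unfolded k_linear_def]]]]] by blast

context fixes X Y assumes X: "X \<in> Ob C" and Y: "Y \<in> Ob C"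
begin
lemma zer_type[intro]: "zer C X Y \<in> Hom C X Y" using kl1[OF X Y] by (elim conjE; blast)
lemma add_type[intro]: "f \<in> Hom C X Y \<Longrightarrow> g \<in> Hom C X Y \<Longrightarrow> add C f g \<in> Hom C X Y"
  using kl1[OF X Y] by (elim conjE) (drule bspec, assumption, drule bspec, assumption, assumption)
lemma neg_type[intro]: "f \<in> Hom C X Y \<Longrightarrow> neg C f \<in> Hom C X Y" using kl1[OF X Y] by (elim conjE; blast)
lemma add_assoc: "f \<in> Hom C X Y \<Longrightarrow> g \<in> Hom C X Y \<Longrightarrow> h \<in> Hom C X Y \<Longrightarrow> add C (add C f g) h = add C f (add C g h)"
  using kl1[OF X Y] by (elim conjE; blast)
lemma add_comm: "f \<in> Hom C X Y \<Longrightarrow> g \<in> Hom C X Y \<Longrightarrow> add C f g = add C g f" using kl1[OF X Y] by (elim conjE; blast)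
lemma add_zl: "f \<in> Hom C X Y \<Longrightarrow> add C (zer C X Y) f = f" using kl1[OF X Y] by (elim conjE; blast)
lemma add_nl: "f \<in> Hom C X Y \<Longrightarrow> add C (neg C f) f = zer C X Y" using kl1[OF X Y] by (elim conjE; blast)
lemma add_zr: "f \<in> Hom C X Y \<Longrightarrow> add C f (zer C X Y) = f" using add_zl add_comm zer_type by metis
lemma add_nr: "f \<in> Hom C X Y \<Longrightarrow> add C f (neg C f) = zer C X Y" using add_nl add_comm neg_type by metis
lemma idem_zero: "a \<in> Hom C X Y \<Longrightarrow> add C a a = a \<Longrightarrow> a = zer C X Y"
  by (metis add_assoc add_nl add_zl neg_type)
lemma inv_uniq: "a \<in> Hom C X Y \<Longrightarrow> b \<in> Hom C X Y \<Longrightarrow> add C a b = zer C X Y \<Longrightarrow> a = neg C b"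
  by (metis add_assoc add_nr add_zr add_zl neg_type)
lemma neg_neg: "a \<in> Hom C X Y \<Longrightarrow> neg C (neg C a) = a"
  by (metis add_nr inv_uniq neg_type)
lemma neg_zer: "neg C (zer C X Y) = zer C X Y"
  by (metis add_zl inv_uniq zer_type)
lemma hom_fin: "finite (Hom C X Y)"
proof -
  obtain bs where bs: "set bs \<subseteq> Hom C X Y"
    "\<forall>f\<in>Hom C X Y. \<exists>cs. length cs = length bs \<and> f = lincomb C X Y (zip cs bs)"
    using fd[OF X Y] unfolding fin_dim_hom_def by blast
  have "Hom C X Y \<subseteq> (\<lambda>cs. lincomb C X Y (zip cs bs)) ` {cs :: 'k list. length cs = length bs}"
    using bs(2) by blast
  moreover have "finite {cs :: 'k list. length cs = length bs}"
    using finite_lists_length_eq[OF fk] by simp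
  ultimately show ?thesis using finite_surj by blast
qed
lemma hom_card_pos: "card (Hom C X Y) > 0"
  using hom_fin zer_type card_gt_0_iff by blast
end

context fixes X Y Z assumes X: "X \<in> Ob C" and Y: "Y \<in> Ob C" and Z: "Z \<in> Ob C"
begin
lemma dist_r: "f \<in> Hom C X Y \<Longrightarrow> g \<in> Hom C Y Z \<Longrightarrow> g' \<in> Hom C Y Z \<Longrightarrow> cmp C f (add C g g') = add C (cmp C f g) (cmp C f g')"
  using kl2[OF X Y Z] by blast
lemma dist_l: "f \<in> Hom C X Y \<Longrightarrow> f' \<in> Hom C X Y \<Longrightarrow> g \<in> Hom C Y Z \<Longrightarrow> cmp C (add C f f') g = add C (cmp C f g) (cmp C f' g)"
  using kl2[OF X Y Z] by blast
lemma cmp_zr: "f \<in> Hom C X Y \<Longrightarrow> cmp C f (zer C Y Z) = zer C X Z"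
proof -
  assume f: "f \<in> Hom C X Y"
  have z: "zer C Y Z \<in> Hom C Y Z" using zer_type[OF Y Z] .
  have "cmp C f (zer C Y Z) = cmp C f (add C (zer C Y Z) (zer C Y Z))" using add_zl[OF Y Z z] by simp
  also have "\<dots> = add C (cmp C f (zer C Y Z)) (cmp C f (zer C Y Z))" using dist_r[OF f z z] .
  finally show ?thesis using idem_zero[OF X Z] cmp_type[OF X Y Z f z] by metis
qed
lemma cmp_zl: "g \<in> Hom C Y Z \<Longrightarrow> cmp C (zer C X Y) g = zer C X Z"
proof -
  assume g: "g \<in> Hom C Y Z"
  have z: "zer C X Y \<in> Hom C X Y" using zer_type[OF X Y] .
  have "cmp C (zer C X Y) g = cmp C (add C (zer C X Y) (zer C X Y)) g" using add_zl[OF X Y z] by simp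
  also have "\<dots> = add C (cmp C (zer C X Y) g) (cmp C (zer C X Y) g)" using dist_l[OF z z g] .
  finally show ?thesis using idem_zero[OF X Z] cmp_type[OF X Y Z z g] by metis
qed
lemma cmp_nr: "f \<in> Hom C X Y \<Longrightarrow> g \<in> Hom C Y Z \<Longrightarrow> cmp C f (neg C g) = neg C (cmp C f g)"
proof -
  assume f: "f \<in> Hom C X Y" and g: "g \<in> Hom C Y Z"
  have ng: "neg C g \<in> Hom C Y Z" using neg_type[OF Y Z g] .
  have "add C (cmp C f (neg C g)) (cmp C f g) = cmp C f (add C (neg C g) g)" using dist_r[OF f ng g] by simp
  also have "\<dots> = zer C X Z" using add_nl[OF Y Z g] cmp_zr[OF f] by simp
  finally show ?thesis using inv_uniq[OF X Z] cmp_type[OF X Y Z f g] cmp_type[OF X Y Z f ng] by metis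
qed
lemma cmp_nl: "f \<in> Hom C X Y \<Longrightarrow> g \<in> Hom C Y Z \<Longrightarrow> cmp C (neg C f) g = neg C (cmp C f g)"
proof -
  assume f: "f \<in> Hom C X Y" and g: "g \<in> Hom C Y Z"
  have nf: "neg C f \<in> Hom C X Y" using neg_type[OF X Y f] .
  have "add C (cmp C (neg C f) g) (cmp C f g) = cmp C (add C (neg C f) f) g" using dist_l[OF nf f g] by simp
  also have "\<dots> = zer C X Z" using add_nl[OF X Y f] cmp_zl[OF g] by simp
  finally show ?thesis using inv_uniq[OF X Z] cmp_type[OF X Y Z f g] cmp_type[OF X Y Z nf g] by metis
qed
end

lemma shO_Ob[intro]: "X \<in> Ob C \<Longrightarrow> shO C X \<in> Ob C" using conjunct1[OF shf[unfolded shift_functor_def]] by metis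
lemma shM_type[intro]: "X \<in> Ob C \<Longrightarrow> Y \<in> Ob C \<Longrightarrow> f \<in> Hom C X Y \<Longrightarrow> shM C f \<in> Hom C (shO C X) (shO C Y)"
  using conjunct1[OF conjunct2[OF shf[unfolded shift_functor_def]]] by metis
lemma shM_idm: "X \<in> Ob C \<Longrightarrow> shM C (idm C X) = idm C (shO C X)"
  using conjunct1[OF conjunct2[OF conjunct2[OF shf[unfolded shift_functor_def]]]] by metis
lemma shM_cmp: "X \<in> Ob C \<Longrightarrow> Y \<in> Ob C \<Longrightarrow> Z \<in> Ob C \<Longrightarrow> f \<in> Hom C X Y \<Longrightarrow> g \<in> Hom C Y Z \<Longrightarrow> shM C (cmp C f g) = cmp C (shM C f) (shM C g)"
  using conjunct1[OF conjunct2[OF conjunct2[OF conjunct2[OF shf[unfolded shift_functor_def]]]]] by metis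
lemma shM_add: "X \<in> Ob C \<Longrightarrow> Y \<in> Ob C \<Longrightarrow> f \<in> Hom C X Y \<Longrightarrow> g \<in> Hom C X Y \<Longrightarrow> shM C (add C f g) = add C (shM C f) (shM C g)"
  using conjunct1[OF conjunct2[OF conjunct2[OF conjunct2[OF conjunct2[OF shf[unfolded shift_functor_def]]]]]] by metis
lemma shM_bij: "X \<in> Ob C \<Longrightarrow> Y \<in> Ob C \<Longrightarrow> bij_betw (shM C) (Hom C X Y) (Hom C (shO C X) (shO C Y))"
  using conjunct1[OF conjunct2[OF conjunct2[OF conjunct2[OF conjunct2[OF conjunct2[OF conjunct2[OF shf[unfolded shift_functor_def]]]]]]]] by metis
lemma shM_zer: "X \<in> Ob C \<Longrightarrow> Y \<in> Ob C \<Longrightarrow> shM C (zer C X Y) = zer C (shO C X) (shO C Y)"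
proof -
  assume X: "X \<in> Ob C" and Y: "Y \<in> Ob C"
  have z: "zer C X Y \<in> Hom C X Y" using zer_type[OF X Y] .
  have "shM C (zer C X Y) = shM C (add C (zer C X Y) (zer C X Y))" using add_zl[OF X Y z] by simp
  also have "\<dots> = add C (shM C (zer C X Y)) (shM C (zer C X Y))" using shM_add[OF X Y z z] .
  finally show ?thesis using idem_zero[OF shO_Ob[OF X] shO_Ob[OF Y]] shM_type[OF X Y z] by metis
qed
lemma shM_neg: "X \<in> Ob C \<Longrightarrow> Y \<in> Ob C \<Longrightarrow> f \<in> Hom C X Y \<Longrightarrow> shM C (neg C f) = neg C (shM C f)"
proof -
  assume X: "X \<in> Ob C" and Y: "Y \<in> Ob C" and f: "f \<in> Hom C X Y"
  have nf: "neg C f \<in> Hom C X Y" using neg_type[OF X Y f] .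
  have "add C (shM C (neg C f)) (shM C f) = shM C (add C (neg C f) f)" using shM_add[OF X Y nf f] by simp
  also have "\<dots> = zer C (shO C X) (shO C Y)" using add_nl[OF X Y f] shM_zer[OF X Y] by simp
  finally show ?thesis using inv_uniq[OF shO_Ob[OF X] shO_Ob[OF Y]] shM_type[OF X Y f] shM_type[OF X Y nf] by metis
qed

lemma shiftn_Ob[intro]: "X \<in> Ob C \<Longrightarrow> shiftn C i X \<in> Ob C"
  by (induction i) (auto simp: shiftn_def)
lemma shiftn_Suc: "shiftn C (Suc i) X = shO C (shiftn C i X)" by (simp add: shiftn_def)
lemma shiftn_1: "shiftn C 1 X = shO C X" by (simp add: shiftn_def)
lemma shiftn_add: "shiftn C i (shiftn C j X) = shiftn C (i + j) X" by (simp add: shiftn_def funpow_add)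

lemma shMn_bij: "X \<in> Ob C \<Longrightarrow> Y \<in> Ob C \<Longrightarrow> bij_betw (shM C ^^ j) (Hom C X Y) (Hom C (shiftn C j X) (shiftn C j Y))"
proof (induction j)
  case 0 then show ?case using bij_betw_id[of "Hom C X Y"] by (simp add: shiftn_def id_def)
next
  case (Suc j)
  have "bij_betw (shM C \<circ> (shM C ^^ j)) (Hom C X Y) (Hom C (shiftn C (Suc j) X) (shiftn C (Suc j) Y))"
    using bij_betw_trans[OF Suc(1)[OF Suc(2,3)] shM_bij[OF shiftn_Ob[OF Suc(2)] shiftn_Ob[OF Suc(3)]]]
    by (simp add: shiftn_Suc)
  then show ?case by (simp add: comp_def)
qed

end


context ptc begin

lemma dist_typ: "(X, Y, W, f, g, h) \<in> Dist C \<Longrightarrow> X \<in> Ob C \<and> Y \<in> Ob C \<and> W \<in> Ob C \<and>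
    f \<in> Hom C X Y \<and> g \<in> Hom C Y W \<and> h \<in> Hom C W (shO C X)"
proof -
  assume d: "(X, Y, W, f, g, h) \<in> Dist C"
  have "\<forall>(X, Y, Z, f, g, h) \<in> Dist C. X \<in> Ob C \<and> Y \<in> Ob C \<and> Z \<in> Ob C \<and>
        f \<in> Hom C X Y \<and> g \<in> Hom C Y Z \<and> h \<in> Hom C Z (shO C X)"
    using conjunct1[OF tri[unfolded triangulated_def]] .
  from bspec[OF this d] show ?thesis by simp
qed

lemma tr1z: "is_zero_obj C Z0 \<Longrightarrow> X \<in> Ob C \<Longrightarrow>
   (X, X, Z0, idm C X, zer C X Z0, zer C Z0 (shO C X)) \<in> Dist C"
  using conjunct1[OF conjunct2[OF conjunct2[OF tri[unfolded triangulated_def]]]] by metis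

lemma tr2: "X \<in> Ob C \<Longrightarrow> Y \<in> Ob C \<Longrightarrow> Z \<in> Ob C \<Longrightarrow>
        f \<in> Hom C X Y \<Longrightarrow> g \<in> Hom C Y Z \<Longrightarrow> h \<in> Hom C Z (shO C X) \<Longrightarrow>
        ((X, Y, Z, f, g, h) \<in> Dist C \<longleftrightarrow>
         (Y, Z, shO C X, g, h, neg C (shM C f)) \<in> Dist C)"
  using conjunct1[OF conjunct2[OF conjunct2[OF conjunct2[OF conjunct2[OF tri[unfolded triangulated_def]]]]]]
  by blast

lemma tr3: "(X, Y, Z, f, g, h) \<in> Dist C \<Longrightarrow> (X', Y', Z', f', g', h') \<in> Dist C \<Longrightarrow>
        u \<in> Hom C X X' \<Longrightarrow> v \<in> Hom C Y Y' \<Longrightarrow> cmp C f v = cmp C u f'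
        \<Longrightarrow> (\<exists>w\<in>Hom C Z Z'. cmp C g w = cmp C v g' \<and>
                cmp C h (shM C u) = cmp C w h')"
  using conjunct1[OF conjunct2[OF conjunct2[OF conjunct2[OF conjunct2[OF conjunct2[OF tri[unfolded triangulated_def]]]]]]]
  by blast

lemma rot: "(X, Y, W, f, g, h) \<in> Dist C \<Longrightarrow> (Y, W, shO C X, g, h, neg C (shM C f)) \<in> Dist C"
  using tr2 dist_typ by blast

lemma ex_zero: "\<exists>Z0. is_zero_obj C Z0"
  using addi unfolding additive_def by blast

lemma zero_Ob: "is_zero_obj C Z0 \<Longrightarrow> Z0 \<in> Ob C" unfolding is_zero_obj_def by blast
lemma zero_from: "is_zero_obj C Z0 \<Longrightarrow> X \<in> Ob C \<Longrightarrow> Hom C Z0 X = {zer C Z0 X}"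
  unfolding is_zero_obj_def by blast
lemma zero_to: "is_zero_obj C Z0 \<Longrightarrow> X \<in> Ob C \<Longrightarrow> Hom C X Z0 = {zer C X Z0}"
  unfolding is_zero_obj_def by blast

lemma zero_shift: assumes z: "is_zero_obj C Z0" shows "is_zero_obj C (shO C Z0)"
proof -
  have Z: "Z0 \<in> Ob C" using zero_Ob[OF z] .
  have S: "shO C Z0 \<in> Ob C" using Z by auto
  have "Hom C (shO C Z0) (shO C Z0) = shM C ` Hom C Z0 Z0"
    using shM_bij[OF Z Z] unfolding bij_betw_def by simp
  also have "\<dots> = {zer C (shO C Z0) (shO C Z0)}" using zero_from[OF z Z] shM_zer[OF Z Z] by simp
  finally have E: "Hom C (shO C Z0) (shO C Z0) = {zer C (shO C Z0) (shO C Z0)}" .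
  have I: "idm C (shO C Z0) = zer C (shO C Z0) (shO C Z0)" using idm_type[OF S] E by blast
  have A: "a = zer C (shO C Z0) X" if X: "X \<in> Ob C" and a: "a \<in> Hom C (shO C Z0) X" for X a
  proof -
    have "a = cmp C (idm C (shO C Z0)) a" using idl[OF S X a] by simp
    also have "\<dots> = zer C (shO C Z0) X" unfolding I using cmp_zl[OF S S X a] .
    finally show ?thesis .
  qed
  have B: "a = zer C X (shO C Z0)" if X: "X \<in> Ob C" and a: "a \<in> Hom C X (shO C Z0)" for X a
  proof -
    have "a = cmp C a (idm C (shO C Z0))" using idr[OF X S a] by simp
    also have "\<dots> = zer C X (shO C Z0)" unfolding I using cmp_zr[OF X S S a] .
    finally show ?thesis .
  qed
  show ?thesis unfolding is_zero_obj_def using S A B zer_type S by blast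
qed

lemma zero_tri: assumes z: "is_zero_obj C Z0" and A: "A \<in> Ob C"
  shows "(Z0, A, A, zer C Z0 A, idm C A, zer C A (shO C Z0)) \<in> Dist C"
proof -
  have Z: "Z0 \<in> Ob C" using zero_Ob[OF z] .
  have d: "(A, A, shO C Z0, idm C A, zer C A (shO C Z0), zer C (shO C Z0) (shO C A)) \<in> Dist C"
    using tr1z[OF zero_shift[OF z] A] .
  have "neg C (shM C (zer C Z0 A)) = zer C (shO C Z0) (shO C A)"
    using shM_zer[OF Z A] neg_zer[OF shO_Ob[OF Z] shO_Ob[OF A]] by simp
  then show ?thesis using tr2[OF Z A A zer_type[OF Z A] idm_type[OF A] zer_type[OF A shO_Ob[OF Z]]] d
    by simp
qed

lemma fg0: assumes d: "(X, Y, W, f, g, h) \<in> Dist C" shows "cmp C f g = zer C X W"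
proof -
  obtain Z0 where z: "is_zero_obj C Z0" using ex_zero by blast
  have T: "X \<in> Ob C" "Y \<in> Ob C" "W \<in> Ob C" "f \<in> Hom C X Y" "g \<in> Hom C Y W" using dist_typ[OF d] by auto
  have Z: "Z0 \<in> Ob C" using zero_Ob[OF z] .
  obtain w where w: "w \<in> Hom C Z0 W" "cmp C (zer C X Z0) w = cmp C f g"
    using tr3[OF tr1z[OF z T(1)] d idm_type[OF T(1)] T(4)] idl[OF T(1) T(2) T(4)] by auto
  have "w = zer C Z0 W" using w(1) zero_from[OF z T(3)] by simp
  then show ?thesis using w(2) cmp_zl[OF T(1) Z T(3) zer_type[OF Z T(3)]] by simp
qed

lemma exact_contra: assumes d: "(X, Y, W, f, g, h) \<in> Dist C" and L: "L \<in> Ob C"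
  shows "{s \<in> Hom C Y L. cmp C f s = zer C X L} = (\<lambda>r. cmp C g r) ` Hom C W L"
proof -
  obtain Z0 where z: "is_zero_obj C Z0" using ex_zero by blast
  have T: "X \<in> Ob C" "Y \<in> Ob C" "W \<in> Ob C" "f \<in> Hom C X Y" "g \<in> Hom C Y W" using dist_typ[OF d] by auto
  have Z: "Z0 \<in> Ob C" using zero_Ob[OF z] .
  show ?thesis
  proof (rule set_eqI, rule iffI)
    fix s assume "s \<in> {s \<in> Hom C Y L. cmp C f s = zer C X L}"
    then have s: "s \<in> Hom C Y L" "cmp C f s = zer C X L" by auto
    have "cmp C f s = cmp C (zer C X Z0) (zer C Z0 L)" using s(2) cmp_zl[OF T(1) Z L zer_type[OF Z L]] by simp
    from tr3[OF d zero_tri[OF z L] zer_type[OF T(1) Z] s(1) this]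
    obtain w where w: "w \<in> Hom C W L" "cmp C g w = cmp C s (idm C L)" by blast
    have "s = cmp C g w" using w(2) idr[OF T(2) L s(1)] by simp
    then show "s \<in> (\<lambda>r. cmp C g r) ` Hom C W L" using w(1) by blast
  next
    fix s assume "s \<in> (\<lambda>r. cmp C g r) ` Hom C W L"
    then obtain r where r: "r \<in> Hom C W L" "s = cmp C g r" by blast
    have "cmp C f s = cmp C (cmp C f g) r" using cmp_assoc[OF T(1,2,3) L T(4,5) r(1)] r(2) by simp
    also have "\<dots> = zer C X L" using fg0[OF d] cmp_zl[OF T(1,3) L r(1)] by simp
    finally show "s \<in> {s \<in> Hom C Y L. cmp C f s = zer C X L}" using r cmp_type[OF T(2,3) L T(5) r(1)] by simp
  qed
qed

lemma exact_co: assumes d: "(X, Y, W, f, g, h) \<in> Dist C" and A: "A \<in> Ob C"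
  shows "{s \<in> Hom C A Y. cmp C s g = zer C A W} = (\<lambda>r. cmp C r f) ` Hom C A X"
proof -
  obtain Z0 where z: "is_zero_obj C Z0" using ex_zero by blast
  have T: "X \<in> Ob C" "Y \<in> Ob C" "W \<in> Ob C" "f \<in> Hom C X Y" "g \<in> Hom C Y W" "h \<in> Hom C W (shO C X)"
    using dist_typ[OF d] by auto
  have Z: "Z0 \<in> Ob C" using zero_Ob[OF z] .
  have SA: "shO C A \<in> Ob C" and SX: "shO C X \<in> Ob C" and SY: "shO C Y \<in> Ob C" using A T by auto
  show ?thesis
  proof (rule set_eqI, rule iffI)
    fix s assume "s \<in> {s \<in> Hom C A Y. cmp C s g = zer C A W}"
    then have s: "s \<in> Hom C A Y" "cmp C s g = zer C A W" by auto
    have d1: "(A, Z0, shO C A, zer C A Z0, zer C Z0 (shO C A), neg C (shM C (idm C A))) \<in> Dist C"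
      using rot[OF tr1z[OF z A]] .
    have d2: "(Y, W, shO C X, g, h, neg C (shM C f)) \<in> Dist C" using rot[OF d] .
    have c: "cmp C (zer C A Z0) (zer C Z0 W) = cmp C s g"
      using s(2) cmp_zl[OF A Z T(3) zer_type[OF Z T(3)]] by simp
    from tr3[OF d1 d2 s(1) zer_type[OF Z T(3)] c]
    obtain w where w: "w \<in> Hom C (shO C A) (shO C X)"
      "cmp C (neg C (shM C (idm C A))) (shM C s) = cmp C w (neg C (shM C f))" by blast
    have sf: "shM C f \<in> Hom C (shO C X) (shO C Y)" using T by auto
    have ss: "shM C s \<in> Hom C (shO C A) (shO C Y)" using A T s by auto
    have "neg C (shM C s) = neg C (cmp C w (shM C f))"
      using w(2) shM_idm[OF A] cmp_nl[OF SA SA SY idm_type[OF SA] ss] idl[OF SA SY ss]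
        cmp_nr[OF SA SX SY w(1) sf] by simp
    then have e1: "shM C s = cmp C w (shM C f)"
      using neg_neg[OF SA SY ss] neg_neg[OF SA SY cmp_type[OF SA SX SY w(1) sf]] by metis
    obtain r where r: "r \<in> Hom C A X" "w = shM C r"
      using w(1) shM_bij[OF A T(1)] unfolding bij_betw_def by blast
    have rf: "cmp C r f \<in> Hom C A Y" using cmp_type[OF A T(1,2) r(1) T(4)] .
    have "shM C s = shM C (cmp C r f)" using e1 r(2) shM_cmp[OF A T(1,2) r(1) T(4)] by simp
    then have "s = cmp C r f" using shM_bij[OF A T(2)] s(1) rf unfolding bij_betw_def inj_on_def by blast
    then show "s \<in> (\<lambda>r. cmp C r f) ` Hom C A X" using r(1) by blast
  next
    fix s assume "s \<in> (\<lambda>r. cmp C r f) ` Hom C A X"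
    then obtain r where r: "r \<in> Hom C A X" "s = cmp C r f" by blast
    have "cmp C s g = cmp C r (cmp C f g)" using cmp_assoc[OF A T(1,2,3) r(1) T(4,5)] r(2) by simp
    also have "\<dots> = zer C A W" using fg0[OF d] cmp_zr[OF A T(1,3) r(1)] by simp
    finally show "s \<in> {s \<in> Hom C A Y. cmp C s g = zer C A W}" using r cmp_type[OF A T(1,2) r(1) T(4)] by simp
  qed
qed

end



definition rho :: "('o, 'm, 'k) tricat \<Rightarrow> 'm \<Rightarrow> 'm" where "rho C f = neg C (shM C f)"

context ptc begin

lemma card_left: assumes X: "X \<in> Ob C" and Y: "Y \<in> Ob C" and L: "L \<in> Ob C" and f: "f \<in> Hom C X Y"
  shows "card (Hom C Y L) = card {s \<in> Hom C Y L. cmp C f s = zer C X L} * card ((\<lambda>s. cmp C f s) ` Hom C Y L)"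
proof -
  have "card (Hom C Y L) = card {s \<in> Hom C Y L. cmp C f s = cmp C f (zer C Y L)} * card ((\<lambda>s. cmp C f s) ` Hom C Y L)"
    by (rule card_ker_im[where p = "add C" and ng = "neg C" and q = "add C" and \<phi> = "\<lambda>s. cmp C f s", OF hom_fin[OF Y L] zer_type[OF Y L] add_type[OF Y L] neg_type[OF Y L] add_assoc[OF Y L]
        add_comm[OF Y L] add_zl[OF Y L] add_nl[OF Y L] dist_r[OF X Y L f]])
  then show ?thesis using cmp_zr[OF X Y L f] by simp
qed

lemma card_right: assumes A: "A \<in> Ob C" and Y: "Y \<in> Ob C" and W: "W \<in> Ob C" and g: "g \<in> Hom C Y W"
  shows "card (Hom C A Y) = card {s \<in> Hom C A Y. cmp C s g = zer C A W} * card ((\<lambda>s. cmp C s g) ` Hom C A Y)"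
proof -
  have "card (Hom C A Y) = card {s \<in> Hom C A Y. cmp C s g = cmp C (zer C A Y) g} * card ((\<lambda>s. cmp C s g) ` Hom C A Y)"
    by (rule card_ker_im[where p = "add C" and ng = "neg C" and q = "add C" and \<phi> = "\<lambda>s. cmp C s g", OF hom_fin[OF A Y] zer_type[OF A Y] add_type[OF A Y] neg_type[OF A Y] add_assoc[OF A Y]
        add_comm[OF A Y] add_zl[OF A Y] add_nl[OF A Y] dist_l[OF A Y W _ _ g]])
  then show ?thesis using cmp_zl[OF A Y W g] by simp
qed



lemma img_neg_left: assumes X: "X \<in> Ob C" and Y: "Y \<in> Ob C" and L: "L \<in> Ob C" and f: "f \<in> Hom C X Y"
  shows "(\<lambda>s. cmp C (neg C f) s) ` Hom C Y L = (\<lambda>s. cmp C f s) ` Hom C Y L"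
proof -
  have e: "cmp C (neg C f) s = cmp C f (neg C s)" if s: "s \<in> Hom C Y L" for s
    using cmp_nl[OF X Y L f s] cmp_nr[OF X Y L f s] by simp
  show ?thesis
  proof (rule set_eqI, rule iffI)
    fix x assume "x \<in> (\<lambda>s. cmp C (neg C f) s) ` Hom C Y L"
    then obtain s where "s \<in> Hom C Y L" "x = cmp C (neg C f) s" by blast
    then show "x \<in> (\<lambda>s. cmp C f s) ` Hom C Y L" using e neg_type[OF Y L] by blast
  next
    fix x assume "x \<in> (\<lambda>s. cmp C f s) ` Hom C Y L"
    then obtain s where s: "s \<in> Hom C Y L" "x = cmp C f s" by blast
    then have "x = cmp C (neg C f) (neg C s)" using e[OF neg_type[OF Y L s(1)]] neg_neg[OF Y L s(1)] by simp
    then show "x \<in> (\<lambda>s. cmp C (neg C f) s) ` Hom C Y L" using neg_type[OF Y L s(1)] by blast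
  qed
qed

lemma img_neg_right: assumes A: "A \<in> Ob C" and X: "X \<in> Ob C" and Y: "Y \<in> Ob C" and f: "f \<in> Hom C X Y"
  shows "(\<lambda>s. cmp C s (neg C f)) ` Hom C A X = (\<lambda>s. cmp C s f) ` Hom C A X"
proof -
  have e: "cmp C s (neg C f) = cmp C (neg C s) f" if s: "s \<in> Hom C A X" for s
    using cmp_nl[OF A X Y s f] cmp_nr[OF A X Y s f] by simp
  show ?thesis
  proof (rule set_eqI, rule iffI)
    fix x assume "x \<in> (\<lambda>s. cmp C s (neg C f)) ` Hom C A X"
    then obtain s where "s \<in> Hom C A X" "x = cmp C s (neg C f)" by blast
    then show "x \<in> (\<lambda>s. cmp C s f) ` Hom C A X" using e neg_type[OF A X] by blast
  next
    fix x assume "x \<in> (\<lambda>s. cmp C s f) ` Hom C A X"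
    then obtain s where s: "s \<in> Hom C A X" "x = cmp C s f" by blast
    then have "x = cmp C (neg C s) (neg C f)" using e[OF neg_type[OF A X s(1)]] neg_neg[OF A X s(1)] by simp
    then show "x \<in> (\<lambda>s. cmp C s (neg C f)) ` Hom C A X" using neg_type[OF A X s(1)] by blast
  qed
qed

lemma iso_inv: "iso C e X Y \<Longrightarrow> \<exists>g\<in>Hom C Y X. cmp C e g = idm C X \<and> cmp C g e = idm C Y"
  unfolding iso_def by blast
lemma iso_type: "iso C e X Y \<Longrightarrow> e \<in> Hom C X Y" unfolding iso_def by blast

lemma iso_card_src: assumes X: "X \<in> Ob C" and X': "X' \<in> Ob C" and Y: "Y \<in> Ob C" and e: "iso C e X' X"
  shows "card (Hom C X' Y) = card (Hom C X Y)"
proof -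
  obtain g where g: "g \<in> Hom C X X'" "cmp C e g = idm C X'" "cmp C g e = idm C X" using iso_inv[OF e] by blast
  have et: "e \<in> Hom C X' X" using iso_type[OF e] .
  have "bij_betw (\<lambda>s. cmp C g s) (Hom C X' Y) (Hom C X Y)"
  proof (rule bij_betw_byWitness[where f' = "\<lambda>s. cmp C e s"])
    show "\<forall>a\<in>Hom C X' Y. cmp C e (cmp C g a) = a"
      using cmp_assoc[OF X' X X' Y et g(1)] g(2) idl[OF X' Y] by simp
    show "\<forall>a\<in>Hom C X Y. cmp C g (cmp C e a) = a"
      using cmp_assoc[OF X X' X Y g(1) et] g(3) idl[OF X Y] by simp
  qed (use cmp_type[OF X X' Y g(1)] cmp_type[OF X' X Y et] in auto)
  then show ?thesis by (rule bij_betw_same_card)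
qed

end

locale ptri = ptc +
  fixes Z M L :: 'o and l m n :: 'm
  assumes d0: "(Z, M, L, l, m, n) \<in> Dist C"
begin
end



context ptri begin

abbreviation "Zs i \<equiv> shiftn C i Z"
abbreviation "Ms i \<equiv> shiftn C i M"
abbreviation "Ls i \<equiv> shiftn C i L"
definition "ls i = (rho C ^^ i) l"
definition "ms i = (rho C ^^ i) m"
definition "ns i = (rho C ^^ i) n"

lemma Di: "(Zs i, Ms i, Ls i, ls i, ms i, ns i) \<in> Dist C"
proof (induction i)
  case 0 then show ?case using d0 by (simp add: shiftn_def ls_def ms_def ns_def)
next
  case (Suc i)
  from rot[OF rot[OF rot[OF Suc]]] show ?case
    by (simp add: shiftn_Suc ls_def ms_def ns_def rho_def)
qed

lemma R1: "(Ms i, Ls i, Zs (Suc i), ms i, ns i, ls (Suc i)) \<in> Dist C"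
  using rot[OF Di[of i]] by (simp add: shiftn_Suc ls_def rho_def)
lemma R2: "(Ls i, Zs (Suc i), Ms (Suc i), ns i, ls (Suc i), ms (Suc i)) \<in> Dist C"
  using rot[OF R1[of i]] by (simp add: shiftn_Suc ms_def rho_def)

lemma ObZ: "Z \<in> Ob C" and ObM: "M \<in> Ob C" and ObL: "L \<in> Ob C" and nT: "n \<in> Hom C L (shO C Z)"
  using dist_typ[OF d0] by auto

lemma typs: "Zs i \<in> Ob C" "Ms i \<in> Ob C" "Ls i \<in> Ob C" "ls i \<in> Hom C (Zs i) (Ms i)"
  "ms i \<in> Hom C (Ms i) (Ls i)" "ns i \<in> Hom C (Ls i) (Zs (Suc i))"
  using dist_typ[OF Di[of i]] by (auto simp: shiftn_Suc)

definition "Pset i = (\<lambda>s. cmp C (ns i) s) ` Hom C (Zs (Suc i)) L"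
definition "Qset i = (\<lambda>s. cmp C (ms i) s) ` Hom C (Ls i) L"
definition "Rset i = (\<lambda>s. cmp C (ls i) s) ` Hom C (Ms i) L"

lemma cL: "card (Hom C (Ls i) L) = card (Pset i) * card (Qset i)"
  using card_left[OF typs(2) typs(3) ObL typs(5)] exact_contra[OF R1[of i] ObL]
  unfolding Pset_def Qset_def by simp
lemma cM: "card (Hom C (Ms i) L) = card (Qset i) * card (Rset i)"
  using card_left[OF typs(1) typs(2) ObL typs(4)] exact_contra[OF Di[of i] ObL]
  unfolding Rset_def Qset_def by simp
lemma cZ: "card (Hom C (Zs (Suc i)) L) = card (Rset (Suc i)) * card (Pset i)"
  using card_left[OF typs(3) typs(1) ObL typs(6)] exact_contra[OF R2[of i] ObL]
  unfolding Rset_def Pset_def by simp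

abbreviation "A \<equiv> shO C Z"
lemma ObA: "A \<in> Ob C" using ObZ by auto

definition "Uset i = (\<lambda>s. cmp C s (ls i)) ` Hom C A (Zs i)"
definition "Vset i = (\<lambda>s. cmp C s (ms i)) ` Hom C A (Ms i)"
definition "Wset i = (\<lambda>s. cmp C s (ns i)) ` Hom C A (Ls i)"

lemma dM: "card (Hom C A (Ms i)) = card (Uset i) * card (Vset i)"
  using card_right[OF ObA typs(2) typs(3) typs(5)] exact_co[OF Di[of i] ObA]
  unfolding Uset_def Vset_def by simp
lemma dL: "card (Hom C A (Ls i)) = card (Vset i) * card (Wset i)"
  using card_right[OF ObA typs(3) typs(1)[of "Suc i"] typs(6)] exact_co[OF R1[of i] ObA]
  unfolding Vset_def Wset_def by simp
lemma dZ: "card (Hom C A (Zs (Suc i))) = card (Wset i) * card (Uset (Suc i))"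
  using card_right[OF ObA typs(1)[of "Suc i"] typs(2)[of "Suc i"] typs(4)] exact_co[OF R2[of i] ObA]
  unfolding Uset_def Wset_def by simp

end


context ptri begin

lemma shA: "shiftn C i A = Zs (Suc i)"
  using shiftn_add[of i 1 Z] shiftn_1[of Z] by simp

lemma Nt: "(shM C ^^ i) n \<in> Hom C (Ls i) (Zs (Suc i))"
  using shMn_bij[OF ObL ObA, of i] nT shA unfolding bij_betw_def by auto

lemma ns_shape: "ns i = (if even i then (shM C ^^ i) n else neg C ((shM C ^^ i) n))"
proof (induction i)
  case 0 then show ?case by (simp add: ns_def)
next
  case (Suc i)
  have "ns (Suc i) = neg C (shM C (ns i))" by (simp add: ns_def rho_def)
  then show ?case
  proof (cases "even i")
    case True then show ?thesis using Suc \<open>ns (Suc i) = _\<close> by simp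
  next
    case False
    have "ns (Suc i) = neg C (shM C (neg C ((shM C ^^ i) n)))" using Suc False \<open>ns (Suc i) = _\<close> by simp
    also have "\<dots> = neg C (neg C (shM C ((shM C ^^ i) n)))" using shM_neg[OF typs(3) typs(1)[of "Suc i"] Nt] by simp
    also have "\<dots> = shM C ((shM C ^^ i) n)"
      using neg_neg[OF shO_Ob[OF typs(3)] shO_Ob[OF typs(1)[of "Suc i"]] shM_type[OF typs(3) typs(1)[of "Suc i"] Nt]] .
    finally show ?thesis using False by simp
  qed
qed

lemma Pset_N: "Pset i = (\<lambda>s. cmp C ((shM C ^^ i) n) s) ` Hom C (Zs (Suc i)) L"
  unfolding Pset_def ns_shape using img_neg_left[OF typs(3) typs(1)[of "Suc i"] ObL Nt] by simp

lemma Wset_N: "Wset i = (\<lambda>s. cmp C s ((shM C ^^ i) n)) ` Hom C A (Ls i)"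
  unfolding Wset_def ns_shape using img_neg_right[OF ObA typs(3) typs(1)[of "Suc i"] Nt] by simp

lemma Pset0: "Pset 0 = (\<lambda>s. cmp C n s) ` Hom C A L"
  unfolding Pset_def by (simp add: ns_def shiftn_1 shiftn_def)
lemma Wset0: "Wset 0 = (\<lambda>s. cmp C s n) ` Hom C A L"
  unfolding Wset_def by (simp add: ns_def shiftn_def)

lemma period_cards: "card (Pset t) = card (Pset 0) \<and> card (Wset t) = card (Wset 0)"
proof -
  obtain \<eta> where eiso: "\<And>X. X \<in> Ob C \<Longrightarrow> iso C (\<eta> X) (shiftn C t X) X"
    and enat: "\<And>X Y f. X \<in> Ob C \<Longrightarrow> Y \<in> Ob C \<Longrightarrow> f \<in> Hom C X Y \<Longrightarrow>
           cmp C (\<eta> X) f = cmp C ((shM C ^^ t) f) (\<eta> Y)"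
    using eta by blast
  define N where "N = (shM C ^^ t) n"
  define Lt where "Lt = Ls t"
  define At where "At = Zs (Suc t)"
  have N: "N \<in> Hom C Lt At" unfolding N_def Lt_def At_def using Nt .
  have Ob: "Lt \<in> Ob C" "At \<in> Ob C" unfolding Lt_def At_def using typs by auto
  have eL: "iso C (\<eta> L) Lt L" using eiso[OF ObL] unfolding Lt_def .
  have eA: "iso C (\<eta> A) At A" using eiso[OF ObA] shA unfolding At_def by simp
  have nat: "cmp C (\<eta> L) n = cmp C N (\<eta> A)" using enat[OF ObL ObA nT] unfolding N_def .
  obtain gL where gL: "gL \<in> Hom C L Lt" "cmp C (\<eta> L) gL = idm C Lt" "cmp C gL (\<eta> L) = idm C L"
    using iso_inv[OF eL] by blast
  obtain gA where gA: "gA \<in> Hom C A At" "cmp C (\<eta> A) gA = idm C At" "cmp C gA (\<eta> A) = idm C A"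
    using iso_inv[OF eA] by blast
  have hL: "\<eta> L \<in> Hom C Lt L" using iso_type[OF eL] .
  have hA: "\<eta> A \<in> Hom C At A" using iso_type[OF eA] .
  note O = ObL ObA Ob
  have P1: "(\<lambda>s. cmp C N s) ` Hom C At L = (\<lambda>b. cmp C (\<eta> L) b) ` ((\<lambda>s. cmp C n s) ` Hom C A L)"
  proof (rule set_eqI, rule iffI)
    fix x assume "x \<in> (\<lambda>s. cmp C N s) ` Hom C At L"
    then obtain s' where s': "s' \<in> Hom C At L" "x = cmp C N s'" by blast
    define s where "s = cmp C gA s'"
    have s: "s \<in> Hom C A L" unfolding s_def using cmp_type[OF ObA Ob(2) ObL gA(1) s'(1)] .
    have "cmp C (\<eta> L) (cmp C n s) = cmp C (cmp C (\<eta> L) n) s"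
      using cmp_assoc[OF Ob(1) ObL ObA ObL hL nT s] by simp
    also have "\<dots> = cmp C N (cmp C (\<eta> A) s)" unfolding nat using cmp_assoc[OF Ob(1) Ob(2) ObA ObL N hA s] .
    also have "cmp C (\<eta> A) s = cmp C (cmp C (\<eta> A) gA) s'"
      unfolding s_def using cmp_assoc[OF Ob(2) ObA Ob(2) ObL hA gA(1) s'(1)] by simp
    also have "\<dots> = s'" using gA(2) idl[OF Ob(2) ObL s'(1)] by simp
    finally have "x = cmp C (\<eta> L) (cmp C n s)" using s'(2) by simp
    moreover have "cmp C n s \<in> (\<lambda>s. cmp C n s) ` Hom C A L" using s by blast
    ultimately show "x \<in> (\<lambda>b. cmp C (\<eta> L) b) ` ((\<lambda>s. cmp C n s) ` Hom C A L)" by (rule image_eqI)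
  next
    fix x assume "x \<in> (\<lambda>b. cmp C (\<eta> L) b) ` ((\<lambda>s. cmp C n s) ` Hom C A L)"
    then obtain s where s: "s \<in> Hom C A L" "x = cmp C (\<eta> L) (cmp C n s)" by blast
    have "x = cmp C (cmp C (\<eta> L) n) s"
      using cmp_assoc[OF Ob(1) ObL ObA ObL hL nT s(1)] s(2) by simp
    also have "\<dots> = cmp C N (cmp C (\<eta> A) s)" unfolding nat using cmp_assoc[OF Ob(1) Ob(2) ObA ObL N hA s(1)] .
    finally show "x \<in> (\<lambda>s. cmp C N s) ` Hom C At L" using cmp_type[OF Ob(2) ObA ObL hA s(1)] by blast
  qed
  have inj1: "inj_on (\<lambda>b. cmp C (\<eta> L) b) ((\<lambda>s. cmp C n s) ` Hom C A L)"
  proof (rule inj_onI)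
    fix x y assume x: "x \<in> (\<lambda>s. cmp C n s) ` Hom C A L" and y: "y \<in> (\<lambda>s. cmp C n s) ` Hom C A L"
      and e: "cmp C (\<eta> L) x = cmp C (\<eta> L) y"
    have xt: "x \<in> Hom C L L" using x cmp_type[OF ObL ObA ObL nT] by blast
    have yt: "y \<in> Hom C L L" using y cmp_type[OF ObL ObA ObL nT] by blast
    have "x = cmp C (cmp C gL (\<eta> L)) x" using gL(3) idl[OF ObL ObL xt] by simp
    also have "\<dots> = cmp C gL (cmp C (\<eta> L) x)" using cmp_assoc[OF ObL Ob(1) ObL ObL gL(1) hL xt] .
    also have "\<dots> = cmp C gL (cmp C (\<eta> L) y)" using e by simp
    also have "\<dots> = cmp C (cmp C gL (\<eta> L)) y" using cmp_assoc[OF ObL Ob(1) ObL ObL gL(1) hL yt] by simp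
    also have "\<dots> = y" using gL(3) idl[OF ObL ObL yt] by simp
    finally show "x = y" .
  qed
  have c1: "card (Pset t) = card (Pset 0)"
    unfolding Pset_N[of t] Pset0 using P1 card_image[OF inj1] unfolding N_def At_def by simp
  have W1: "(\<lambda>d. cmp C d (\<eta> A)) ` ((\<lambda>s. cmp C s N) ` Hom C A Lt) = (\<lambda>s. cmp C s n) ` Hom C A L"
  proof (rule set_eqI, rule iffI)
    fix x assume "x \<in> (\<lambda>d. cmp C d (\<eta> A)) ` ((\<lambda>s. cmp C s N) ` Hom C A Lt)"
    then obtain s where s: "s \<in> Hom C A Lt" "x = cmp C (cmp C s N) (\<eta> A)" by blast
    have "x = cmp C s (cmp C N (\<eta> A))" using s(2) cmp_assoc[OF ObA Ob(1) Ob(2) ObA s(1) N hA] by simp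
    also have "\<dots> = cmp C (cmp C s (\<eta> L)) n" unfolding nat[symmetric]
      using cmp_assoc[OF ObA Ob(1) ObL ObA s(1) hL nT] by simp
    finally show "x \<in> (\<lambda>s. cmp C s n) ` Hom C A L" using cmp_type[OF ObA Ob(1) ObL s(1) hL] by blast
  next
    fix x assume "x \<in> (\<lambda>s. cmp C s n) ` Hom C A L"
    then obtain s' where s': "s' \<in> Hom C A L" "x = cmp C s' n" by blast
    define s where "s = cmp C s' gL"
    have s: "s \<in> Hom C A Lt" unfolding s_def using cmp_type[OF ObA ObL Ob(1) s'(1) gL(1)] .
    have "cmp C (cmp C s N) (\<eta> A) = cmp C s (cmp C N (\<eta> A))" using cmp_assoc[OF ObA Ob(1) Ob(2) ObA s N hA] .
    also have "\<dots> = cmp C (cmp C s (\<eta> L)) n" unfolding nat[symmetric]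
      using cmp_assoc[OF ObA Ob(1) ObL ObA s hL nT] by simp
    also have "cmp C s (\<eta> L) = cmp C s' (cmp C gL (\<eta> L))"
      unfolding s_def using cmp_assoc[OF ObA ObL Ob(1) ObL s'(1) gL(1) hL] .
    also have "\<dots> = s'" using gL(3) idr[OF ObA ObL s'(1)] by simp
    finally have "x = cmp C (cmp C s N) (\<eta> A)" using s'(2) by simp
    moreover have "cmp C s N \<in> (\<lambda>s. cmp C s N) ` Hom C A Lt" using s by blast
    ultimately show "x \<in> (\<lambda>d. cmp C d (\<eta> A)) ` ((\<lambda>s. cmp C s N) ` Hom C A Lt)" by (rule image_eqI)
  qed
  have inj2: "inj_on (\<lambda>d. cmp C d (\<eta> A)) ((\<lambda>s. cmp C s N) ` Hom C A Lt)"
  proof (rule inj_onI)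
    fix x y assume x: "x \<in> (\<lambda>s. cmp C s N) ` Hom C A Lt" and y: "y \<in> (\<lambda>s. cmp C s N) ` Hom C A Lt"
      and e: "cmp C x (\<eta> A) = cmp C y (\<eta> A)"
    have xt: "x \<in> Hom C A At" using x cmp_type[OF ObA Ob(1) Ob(2) _ N] by blast
    have yt: "y \<in> Hom C A At" using y cmp_type[OF ObA Ob(1) Ob(2) _ N] by blast
    have "x = cmp C x (cmp C (\<eta> A) gA)" using gA(2) idr[OF ObA Ob(2) xt] by simp
    also have "\<dots> = cmp C (cmp C x (\<eta> A)) gA" using cmp_assoc[OF ObA Ob(2) ObA Ob(2) xt hA gA(1)] by simp
    also have "\<dots> = cmp C (cmp C y (\<eta> A)) gA" using e by simp
    also have "\<dots> = cmp C y (cmp C (\<eta> A) gA)" using cmp_assoc[OF ObA Ob(2) ObA Ob(2) yt hA gA(1)] by simp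
    also have "\<dots> = y" using gA(2) idr[OF ObA Ob(2) yt] by simp
    finally show "x = y" .
  qed
  have c2: "card (Wset t) = card (Wset 0)"
    unfolding Wset_N[of t] Wset0 using W1[symmetric] card_image[OF inj2] unfolding N_def Lt_def by simp
  show ?thesis using c1 c2 by simp
qed

end



lemma factor_eq:
  fixes q r p1 p2 a b c :: real
  assumes "q > 0" "r > 0" "p1 > 0" "p2 > 0" "a = q * r" "b = r * p1" "c = p2 * q"
  shows "a powi e / (b powi e * c powi e) = (1 / (p1 * p2)) powi e"
  using assms by (simp add: power_int_mult_distrib power_int_divide_distrib field_simps)

context ptri begin

lemma card_transfer: assumes X: "X \<in> Ob C" and i: "1 \<le> i" "i \<le> t"
  shows "card (Hom C (Zs i) X) = card (Hom C A (shiftn C (t + 1 - i) X))"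
proof -
  obtain \<eta> where eiso: "\<And>X. X \<in> Ob C \<Longrightarrow> iso C (\<eta> X) (shiftn C t X) X"
    using eta by blast
  define j where "j = t + 1 - i"
  have "card (Hom C (Zs i) X) = card (Hom C (shiftn C j (Zs i)) (shiftn C j X))"
    using bij_betw_same_card[OF shMn_bij[OF typs(1) X, of j]] .
  also have "shiftn C j (Zs i) = shiftn C t A"
    using shiftn_add[of j i Z] shA[of t] i unfolding j_def by simp
  also have "card (Hom C (shiftn C t A) (shiftn C j X)) = card (Hom C A (shiftn C j X))"
    using iso_card_src[OF ObA shiftn_Ob[OF ObA] shiftn_Ob[OF X] eiso[OF ObA]] .
  finally show ?thesis unfolding j_def .
qed

lemma part1:
  assumes t: "odd t"
  shows "real (card {b \<in> Hom C L L. \<exists>s\<in>Hom C (shiftn C 1 Z) L. b = cmp C n s}) =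
           sqrt (\<Prod>i=1..t.
             real (card (Hom C (shiftn C i M) L)) powi ((-1)^i) /
             (real (card (Hom C (shiftn C i Z) L)) powi ((-1)^i) *
              real (card (Hom C (shiftn C i L) L)) powi ((-1)^i)))"
proof -
  define p where "p i = real (card (Pset i))" for i
  define q where "q i = real (card (Qset i))" for i
  define r where "r i = real (card (Rset i))" for i
  have pos: "p i > 0" "q i > 0" "r i > 0" for i
  proof -
    have "card (Pset i) * card (Qset i) > 0" using cL[of i] hom_card_pos[OF typs(3)[of i] ObL] by simp
    moreover have "card (Qset i) * card (Rset i) > 0" using cM[of i] hom_card_pos[OF typs(2)[of i] ObL] by simp
    ultimately show "p i > 0" "q i > 0" "r i > 0" unfolding p_def q_def r_def by auto
  qed
  have fac: "real (card (Hom C (shiftn C i M) L)) powi ((-1)^i) /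
             (real (card (Hom C (shiftn C i Z) L)) powi ((-1)^i) *
              real (card (Hom C (shiftn C i L) L)) powi ((-1)^i)) = (1 / (p (i-1) * p i)) powi ((-1)^i)"
    if i: "i \<in> {1..t}" for i
  proof -
    obtain j where j: "i = Suc j" using i by (cases i) auto
    show ?thesis unfolding j diff_Suc_1
      by (rule factor_eq[OF pos(2)[of "Suc j"] pos(3)[of "Suc j"] pos(1)[of j] pos(1)[of "Suc j"]])
        (use cM[of "Suc j"] cZ[of j] cL[of "Suc j"] in \<open>simp_all add: p_def q_def r_def\<close>)
  qed
  have "(\<Prod>i=1..t. real (card (Hom C (shiftn C i M) L)) powi ((-1)^i) /
             (real (card (Hom C (shiftn C i Z) L)) powi ((-1)^i) *
              real (card (Hom C (shiftn C i L) L)) powi ((-1)^i)))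
     = (\<Prod>i=1..t. (1 / (p (i-1) * p i)) powi ((-1)^i))" using fac by (rule prod.cong[OF refl])
  also have "\<dots> = p 0 * p t powi (-((-1)^t))" by (rule telescope) (use pos in auto)
  also have "\<dots> = p 0 * p 0" using t period_cards unfolding p_def by simp
  finally have e: "(\<Prod>i=1..t. real (card (Hom C (shiftn C i M) L)) powi ((-1)^i) /
             (real (card (Hom C (shiftn C i Z) L)) powi ((-1)^i) *
              real (card (Hom C (shiftn C i L) L)) powi ((-1)^i))) = p 0 * p 0" .
  have "{b \<in> Hom C L L. \<exists>s\<in>Hom C (shiftn C 1 Z) L. b = cmp C n s} = Pset 0"
    unfolding Pset0 shiftn_1 using cmp_type[OF ObL ObA ObL nT] by blast
  then show ?thesis unfolding e using pos(1)[of 0] unfolding p_def by simp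
qed

lemma part2:
  assumes t: "odd t"
  shows "real (card {d \<in> Hom C (shiftn C 1 Z) (shiftn C 1 Z).
                      \<exists>s\<in>Hom C (shiftn C 1 Z) L. d = cmp C s n}) =
           sqrt (\<Prod>i=1..t.
             real (card (Hom C (shiftn C i Z) M)) powi ((-1)^i) /
             (real (card (Hom C (shiftn C i Z) L)) powi ((-1)^i) *
              real (card (Hom C (shiftn C i Z) Z)) powi ((-1)^i)))"
proof -
  define u where "u i = real (card (Uset i))" for i
  define v where "v i = real (card (Vset i))" for i
  define w where "w i = real (card (Wset i))" for i
  have pos: "u i > 0" "v i > 0" "w i > 0" for i
  proof -
    have "card (Uset i) * card (Vset i) > 0" using dM[of i] hom_card_pos[OF ObA typs(2)[of i]] by simp
    moreover have "card (Vset i) * card (Wset i) > 0" using dL[of i] hom_card_pos[OF ObA typs(3)[of i]] by simp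
    ultimately show "u i > 0" "v i > 0" "w i > 0" unfolding u_def v_def w_def by auto
  qed
  define F where "F j = real (card (Hom C A (Ms j))) powi ((-1)^j) /
             (real (card (Hom C A (Ls j))) powi ((-1)^j) *
              real (card (Hom C A (Zs j))) powi ((-1)^j))" for j
  have fac: "F j = (1 / (w (j-1) * w j)) powi ((-1)^j)" if j: "j \<in> {1..t}" for j
  proof -
    obtain k where k: "j = Suc k" using j by (cases j) auto
    have "F j = (1 / (w (Suc k) * w k)) powi ((-1)^j)" unfolding F_def k
      by (rule factor_eq[OF pos(1)[of "Suc k"] pos(2)[of "Suc k"] pos(3)[of "Suc k"] pos(3)[of k]])
        (use dM[of "Suc k"] dZ[of k] dL[of "Suc k"] in \<open>simp_all add: u_def v_def w_def\<close>)
    then show ?thesis using k by (simp add: mult.commute)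
  qed
  have tr: "real (card (Hom C (shiftn C i Z) M)) powi ((-1)^i) /
             (real (card (Hom C (shiftn C i Z) L)) powi ((-1)^i) *
              real (card (Hom C (shiftn C i Z) Z)) powi ((-1)^i)) = F (t + 1 - i)"
    if i: "i \<in> {1..t}" for i
  proof -
    have par: "((-1::int)^i) = (-1)^(t + 1 - i)"
    proof -
      have "even ((t + 1 - i) + i)" using t i by simp
      then have "even (t + 1 - i) = even i" by auto
      then show ?thesis by (simp add: minus_one_power_iff)
    qed
    show ?thesis unfolding F_def par
      using card_transfer[OF ObM] card_transfer[OF ObL] card_transfer[OF ObZ] i by simp
  qed
  have "(\<Prod>i=1..t. real (card (Hom C (shiftn C i Z) M)) powi ((-1)^i) /
             (real (card (Hom C (shiftn C i Z) L)) powi ((-1)^i) *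
              real (card (Hom C (shiftn C i Z) Z)) powi ((-1)^i)))
     = (\<Prod>i=1..t. F (t + 1 - i))" using tr by (rule prod.cong[OF refl])
  also have "\<dots> = (\<Prod>i=1..t. F i)" using prod.atLeastAtMost_rev[of F 1 t] by simp
  also have "\<dots> = (\<Prod>i=1..t. (1 / (w (i-1) * w i)) powi ((-1)^i))" using fac by (rule prod.cong[OF refl])
  also have "\<dots> = w 0 * w t powi (-((-1)^t))" by (rule telescope) (use pos in auto)
  also have "\<dots> = w 0 * w 0" using t period_cards unfolding w_def by simp
  finally have e: "(\<Prod>i=1..t. real (card (Hom C (shiftn C i Z) M)) powi ((-1)^i) /
             (real (card (Hom C (shiftn C i Z) L)) powi ((-1)^i) *
              real (card (Hom C (shiftn C i Z) Z)) powi ((-1)^i))) = w 0 * w 0" .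
  have "{d \<in> Hom C (shiftn C 1 Z) (shiftn C 1 Z). \<exists>s\<in>Hom C (shiftn C 1 Z) L. d = cmp C s n} = Wset 0"
    unfolding Wset0 shiftn_1 using cmp_type[OF ObA ObL ObA _ nT] by blast
  then show ?thesis unfolding e using pos(3)[of 0] unfolding w_def by simp
qed

end

theorem lemma2p2:
  fixes C :: "('o, 'm, 'k::field) tricat" and t :: nat
    and Z M L :: 'o and l m n :: 'm
  assumes "periodic_tricat C t"
    and "t > 1" and "odd t"
    and "(Z, M, L, l, m, n) \<in> Dist C"
  shows "real (card {b \<in> Hom C L L. \<exists>s\<in>Hom C (shiftn C 1 Z) L. b = cmp C n s}) =
           sqrt (\<Prod>i=1..t.
             real (card (Hom C (shiftn C i M) L)) powi ((-1)^i) /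
             (real (card (Hom C (shiftn C i Z) L)) powi ((-1)^i) *
              real (card (Hom C (shiftn C i L) L)) powi ((-1)^i)))
       \<and> real (card {d \<in> Hom C (shiftn C 1 Z) (shiftn C 1 Z).
                      \<exists>s\<in>Hom C (shiftn C 1 Z) L. d = cmp C s n}) =
           sqrt (\<Prod>i=1..t.
             real (card (Hom C (shiftn C i Z) M)) powi ((-1)^i) /
             (real (card (Hom C (shiftn C i Z) L)) powi ((-1)^i) *
              real (card (Hom C (shiftn C i Z) Z)) powi ((-1)^i)))"
proof -
  interpret ptri C t Z M L l m n
    by unfold_locales (use assms in auto)
  show ?thesis using part1[OF assms(3)] part2[OF assms(3)] by blast
qed



end
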